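(* Let $(\Omega,\mathcal{F})$ be a measurable space and $\theta:\Omega\to\Omega$ any $\mathcal{F}/\mathcal{F}$-measurable map. Then there exists a subadditive $\theta$-invariant capacity on $\mathcal{F}$ and there exists a superadditive $\theta$-invariant capacity on $\mathcal{F}$. In particular, there exists a $\theta$-invariant capacity on $\mathcal{F}$.
   Context: A capacity is $\mu:\mathcal{F}\to[0,1]$ with $\mu(\emptyset)=0$, $\mu(\Omega)=1$ and $\mu(A)\le\mu(B)$ for $A\subseteq B$. It is subadditive if $\mu(A\cup B)\le\mu(A)+\mu(B)$ for disjoint $A,B$, and superadditive if $\mu(A\cup B)\ge\mu(A)+\mu(B)$ for disjoint $A,B$. It is $\theta$-invariant if $\mu(\theta^{-1}A)=\mu(A)$ for all $A\in\mathcal{F}$. *)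

theory Defs
  imports "HOL-Analysis.Analysis"
begin

definition capacity :: "'a measure \<Rightarrow> ('a set \<Rightarrow> real) \<Rightarrow> bool" where
  "capacity M \<mu> \<longleftrightarrow>
     (\<forall>A\<in>sets M. 0 \<le> \<mu> A \<and> \<mu> A \<le> 1) \<and>
     \<mu> {} = 0 \<and> \<mu> (space M) = 1 \<and>
     (\<forall>A\<in>sets M. \<forall>B\<in>sets M. A \<subseteq> B \<longrightarrow> \<mu> A \<le> \<mu> B)"

definition subadditive_cap :: "'a measure \<Rightarrow> ('a set \<Rightarrow> real) \<Rightarrow> bool" where
  "subadditive_cap M \<mu> \<longleftrightarrow>
     (\<forall>A\<in>sets M. \<forall>B\<in>sets M. A \<inter> B = {} \<longrightarrow> \<mu> (A \<union> B) \<le> \<mu> A + \<mu> B)"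

definition superadditive_cap :: "'a measure \<Rightarrow> ('a set \<Rightarrow> real) \<Rightarrow> bool" where
  "superadditive_cap M \<mu> \<longleftrightarrow>
     (\<forall>A\<in>sets M. \<forall>B\<in>sets M. A \<inter> B = {} \<longrightarrow> \<mu> (A \<union> B) \<ge> \<mu> A + \<mu> B)"

definition invariant_cap :: "'a measure \<Rightarrow> ('a \<Rightarrow> 'a) \<Rightarrow> ('a set \<Rightarrow> real) \<Rightarrow> bool" where
  "invariant_cap M \<theta> \<mu> \<longleftrightarrow> (\<forall>A\<in>sets M. \<mu> (\<theta> -` A \<inter> space M) = \<mu> A)"

end

theory Submission
  imports Defs
begin

lemma orbit_in_space:
  assumes "\<theta> \<in> measurable M M" "x \<in> space M"
  shows "(\<theta> ^^ n) x \<in> space M"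
  using assms by (induction n) (auto simp: measurable_space)

lemma shift_set:
  assumes "\<theta> \<in> measurable M M" "x \<in> space M"
  shows "((\<theta> ^^ n) x \<in> \<theta> -` A \<inter> space M) = ((\<theta> ^^ Suc n) x \<in> A)"
  using orbit_in_space[OF assms, of n] by (simp add: funpow_swap1)

theorem proposition4:
  fixes M :: "'a measure" and \<theta> :: "'a \<Rightarrow> 'a"
  assumes "space M \<noteq> {}" and "\<theta> \<in> measurable M M"
  shows "(\<exists>\<mu>. capacity M \<mu> \<and> subadditive_cap M \<mu> \<and> invariant_cap M \<theta> \<mu>)
       \<and> (\<exists>\<mu>. capacity M \<mu> \<and> superadditive_cap M \<mu> \<and> invariant_cap M \<theta> \<mu>)
       \<and> (\<exists>\<mu>. capacity M \<mu> \<and> invariant_cap M \<theta> \<mu>)"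
proof -
  obtain x0 where x0: "x0 \<in> space M" using assms(1) by blast
  note sh = shift_set[OF assms(2) x0]
  note orb = orbit_in_space[OF assms(2) x0]
  define \<mu>1 where "\<mu>1 A = (if (\<exists>\<^sub>F m in sequentially. (\<theta> ^^ m) x0 \<in> A) then 1 else (0::real))" for A
  define \<mu>2 where "\<mu>2 A = (if (\<forall>\<^sub>F m in sequentially. (\<theta> ^^ m) x0 \<in> A) then 1 else (0::real))" for A
  have c1: "capacity M \<mu>1"
  proof -
    have "\<exists>\<^sub>F m in sequentially. (\<theta> ^^ m) x0 \<in> B"
      if "A \<subseteq> B" "\<exists>\<^sub>F m in sequentially. (\<theta> ^^ m) x0 \<in> A" for A B
      using that(2) by (rule frequently_elim1) (use that(1) in auto)
    then show ?thesis unfolding capacity_def \<mu>1_def using orb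
      by (auto simp: frequently_def)
  qed
  have s1: "subadditive_cap M \<mu>1"
    unfolding subadditive_cap_def \<mu>1_def by (auto simp: frequently_disj_iff)
  have i1: "invariant_cap M \<theta> \<mu>1"
    unfolding invariant_cap_def \<mu>1_def frequently_def sh
    by (simp only: eventually_sequentially_Suc[where P="\<lambda>n. (\<theta> ^^ n) x0 \<notin> A" for A] not_not, simp)
  have c2: "capacity M \<mu>2"
  proof -
    have "\<forall>\<^sub>F m in sequentially. (\<theta> ^^ m) x0 \<in> B"
      if "A \<subseteq> B" "\<forall>\<^sub>F m in sequentially. (\<theta> ^^ m) x0 \<in> A" for A B
      using that(2) by (rule eventually_mono) (use that(1) in auto)
    then show ?thesis unfolding capacity_def \<mu>2_def using orb
      by auto
  qed
  have s2: "superadditive_cap M \<mu>2"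
  proof -
    have "False" if "A \<inter> B = {}" "\<forall>\<^sub>F m in sequentially. (\<theta> ^^ m) x0 \<in> A"
      "\<forall>\<^sub>F m in sequentially. (\<theta> ^^ m) x0 \<in> B" for A B
    proof -
      have "\<forall>\<^sub>F m in sequentially. False"
        using eventually_conj[OF that(2,3)] by (rule eventually_mono) (use that(1) in auto)
      then show False by simp
    qed
    moreover have "\<forall>\<^sub>F m in sequentially. (\<theta> ^^ m) x0 \<in> A \<or> (\<theta> ^^ m) x0 \<in> B"
      if "\<forall>\<^sub>F m in sequentially. (\<theta> ^^ m) x0 \<in> A" for A B
      using that by (rule eventually_mono) auto
    moreover have "\<forall>\<^sub>F m in sequentially. (\<theta> ^^ m) x0 \<in> A \<or> (\<theta> ^^ m) x0 \<in> B"
      if "\<forall>\<^sub>F m in sequentially. (\<theta> ^^ m) x0 \<in> B" for A B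
      using that by (rule eventually_mono) auto
    ultimately show ?thesis unfolding superadditive_cap_def \<mu>2_def
      by auto
  qed
  have i2: "invariant_cap M \<theta> \<mu>2"
    unfolding invariant_cap_def \<mu>2_def sh
    by (simp only: eventually_sequentially_Suc[where P="\<lambda>n. (\<theta> ^^ n) x0 \<in> A" for A], simp)
  show ?thesis using c1 s1 i1 c2 s2 i2 by blast
qed

end
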